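(* Let $\kappa$ be a regular uncountable cardinal, let $\tau$ be a cardinal with $1 < \tau < \kappa$ and $\kappa^\tau = \kappa$, and let $J$ be a $\kappa$-complete ideal on $\kappa$ with $NS_\kappa \subseteq J$. Suppose that $\clubsuit_\kappa^{-/\tau}[J]$ holds. Then $\clubsuit_\kappa[J]$ holds.
   Context: An ideal on $\kappa$ is a nonempty $J \subseteq P(\kappa)$ with $\kappa \notin J$, every bounded subset of $\kappa$ in $J$, $J$ closed under subsets and under unions of two members; $J^+ = P(\kappa)\setminus J$; $\kappa$-complete means closed under unions of fewer than $\kappa$ members. $NS_\kappa$ is the nonstationary ideal; $[\kappa]^\kappa$ is the set of size-$\kappa$ subsets of $\kappa$; $acc(\kappa)$ is the set of nonzero limit ordinals below $\kappa$. $\clubsuit_\kappa^{-/\tau}[J]$: there are $B^i_\delta \subseteq \delta$ with $\sup B^i_\delta = \delta$ for $\delta \in acc(\kappa)$, $i < \tau$, such that $\{\delta \in acc(\kappa) : \exists i < \tau\,(B^i_\delta \subseteq W)\} \in J^+$ for every $W \in [\kappa]^\kappa$. $\clubsuit_\kappa[J]$: there are $s_\alpha \subseteq \alpha$ with $\sup s_\alpha = \alpha$ for $\alpha \in acc(\kappa)$ such that $\{\alpha \in acc(\kappa) : s_\alpha \subseteq A\} \in J^+$ for all $A \in [\kappa]^\kappa$. *)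

theory Defs
  imports Main
begin

text \<open>The cardinal kappa is represented by a cardinal well-order r (an initial ordinal);
 ordinals below kappa are the elements of Field r.\<close>

definition sless :: "'a rel \<Rightarrow> 'a \<Rightarrow> 'a \<Rightarrow> bool" where
  "sless r a b \<longleftrightarrow> (a, b) \<in> r \<and> a \<noteq> b"

definition regular_card :: "'a rel \<Rightarrow> bool" where
  "regular_card r \<longleftrightarrow> Card_order r \<and>
     (\<forall>A \<subseteq> Field r. (\<forall>a \<in> Field r. \<exists>b \<in> A. (a, b) \<in> r) \<longrightarrow> (card_of A, r) \<in> ordIso)"

definition uncountable_card :: "'a rel \<Rightarrow> bool" where
  "uncountable_card r \<longleftrightarrow> (natLeq, r) \<in> ordLess"

definition acc :: "'a rel \<Rightarrow> 'a set" where
  "acc r = {d \<in> Field r. (\<exists>a. sless r a d) \<and> (\<forall>a. sless r a d \<longrightarrow> (\<exists>b. sless r a b \<and> sless r b d))}"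

definition cofinal_below :: "'a rel \<Rightarrow> 'a set \<Rightarrow> 'a \<Rightarrow> bool" where
  "cofinal_below r B d \<longleftrightarrow> B \<subseteq> underS r d \<and> (\<forall>a \<in> underS r d. \<exists>b \<in> B. (a, b) \<in> r)"

definition bounded_in :: "'a rel \<Rightarrow> 'a set \<Rightarrow> bool" where
  "bounded_in r A \<longleftrightarrow> A \<subseteq> Field r \<and> (\<exists>a \<in> Field r. A \<subseteq> underS r a)"

definition club :: "'a rel \<Rightarrow> 'a set \<Rightarrow> bool" where
  "club r C \<longleftrightarrow> C \<subseteq> Field r \<and>
     (\<forall>a \<in> Field r. \<exists>b \<in> C. sless r a b) \<and>
     (\<forall>d \<in> acc r. (\<forall>a. sless r a d \<longrightarrow> (\<exists>b \<in> C. (a, b) \<in> r \<and> sless r b d)) \<longrightarrow> d \<in> C)"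

definition NS :: "'a rel \<Rightarrow> 'a set set" where
  "NS r = {A. A \<subseteq> Field r \<and> (\<exists>C. club r C \<and> A \<inter> C = {})}"

definition is_ideal :: "'a rel \<Rightarrow> 'a set set \<Rightarrow> bool" where
  "is_ideal r J \<longleftrightarrow> J \<subseteq> Pow (Field r) \<and> J \<noteq> {} \<and> Field r \<notin> J \<and>
     (\<forall>A. bounded_in r A \<longrightarrow> A \<in> J) \<and>
     (\<forall>A \<in> J. \<forall>B. B \<subseteq> A \<longrightarrow> B \<in> J) \<and>
     (\<forall>A \<in> J. \<forall>B \<in> J. A \<union> B \<in> J)"

definition complete_ideal :: "'a rel \<Rightarrow> 'a set set \<Rightarrow> bool" where
  "complete_ideal r J \<longleftrightarrow> (\<forall>F \<subseteq> J. (card_of F, r) \<in> ordLess \<longrightarrow> \<Union>F \<in> J)"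

definition positive :: "'a rel \<Rightarrow> 'a set set \<Rightarrow> 'a set set" where
  "positive r J = Pow (Field r) - J"

definition full_size :: "'a rel \<Rightarrow> 'a set set" where
  "full_size r = {W. W \<subseteq> Field r \<and> (card_of W, r) \<in> ordIso}"

definition clubsuit_minus_tau :: "'a rel \<Rightarrow> 't set \<Rightarrow> 'a set set \<Rightarrow> bool" where
  "clubsuit_minus_tau r T J \<longleftrightarrow> (\<exists>B :: 'a \<Rightarrow> 't \<Rightarrow> 'a set.
     (\<forall>d \<in> acc r. \<forall>i \<in> T. cofinal_below r (B d i) d) \<and>
     (\<forall>W \<in> full_size r. {d \<in> acc r. \<exists>i \<in> T. B d i \<subseteq> W} \<in> positive r J))"

definition clubsuit :: "'a rel \<Rightarrow> 'a set set \<Rightarrow> bool" where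
  "clubsuit r J \<longleftrightarrow> (\<exists>s :: 'a \<Rightarrow> 'a set.
     (\<forall>a \<in> acc r. cofinal_below r (s a) a) \<and>
     (\<forall>A \<in> full_size r. {a \<in> acc r. s a \<subseteq> A} \<in> positive r J))"

end

theory Submission
  imports Defs
begin

lemma wo_basic:
  assumes "Card_order r"
  shows "a \<in> Field r \<Longrightarrow> (a, a) \<in> r"
    and "(a, b) \<in> r \<Longrightarrow> (b, c) \<in> r \<Longrightarrow> (a, c) \<in> r"
    and "(a, b) \<in> r \<Longrightarrow> (b, a) \<in> r \<Longrightarrow> a = b"
    and "a \<in> Field r \<Longrightarrow> b \<in> Field r \<Longrightarrow> (a, b) \<notin> r \<Longrightarrow> (b, a) \<in> r \<and> b \<noteq> a"
proof -
  have W: "Well_order r" using assms card_order_on_well_order_on by blast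
  then have R: "refl_on (Field r) r" and Tr: "trans r" and A: "antisym r" and To: "Total r"
    unfolding well_order_on_def linear_order_on_def partial_order_on_def preorder_on_def
    by auto
  show "a \<in> Field r \<Longrightarrow> (a, a) \<in> r" using R by (simp add: refl_on_def)
  show "(a, b) \<in> r \<Longrightarrow> (b, c) \<in> r \<Longrightarrow> (a, c) \<in> r" using Tr by (meson transD)
  show "(a, b) \<in> r \<Longrightarrow> (b, a) \<in> r \<Longrightarrow> a = b" using A by (meson antisymD)
  show "a \<in> Field r \<Longrightarrow> b \<in> Field r \<Longrightarrow> (a, b) \<notin> r \<Longrightarrow> (b, a) \<in> r \<and> b \<noteq> a"
  proof -
    assume a: "a \<in> Field r" and b: "b \<in> Field r" and n: "(a, b) \<notin> r"
    have "a \<noteq> b" using n R a unfolding refl_on_def by blast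
    then have "(a, b) \<in> r \<or> (b, a) \<in> r" using To a b unfolding total_on_def by blast
    then show "(b, a) \<in> r \<and> b \<noteq> a" using n \<open>a \<noteq> b\<close> by blast
  qed
qed

lemma bound_small:
  assumes "regular_card r" "X \<subseteq> Field r" "(card_of X, r) \<in> ordLess"
  shows "\<exists>c \<in> Field r. \<forall>x \<in> X. (x, c) \<in> r \<and> x \<noteq> c"
proof -
  have C: "Card_order r" using assms(1) regular_card_def by blast
  have "\<not> (\<forall>a \<in> Field r. \<exists>b \<in> X. (a, b) \<in> r)"
  proof
    assume "\<forall>a \<in> Field r. \<exists>b \<in> X. (a, b) \<in> r"
    then have "(card_of X, r) \<in> ordIso" using assms(1,2) unfolding regular_card_def by blast
    then show False using not_ordLess_ordIso assms(3) by blast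
  qed
  then obtain a where a: "a \<in> Field r" "\<forall>b \<in> X. (a, b) \<notin> r" by blast
  show ?thesis
  proof (intro bexI ballI)
    fix x assume "x \<in> X"
    then show "(x, a) \<in> r \<and> x \<noteq> a" using a wo_basic(4)[OF C, of a x] assms(2) by blast
  qed (rule a(1))
qed

lemma big_unbounded:
  assumes C: "Card_order r" and AF: "A \<subseteq> Field r" and iso: "(card_of A, r) \<in> ordIso"
    and aF: "a \<in> Field r"
  shows "\<exists>b \<in> A. (a, b) \<in> r"
proof (rule ccontr)
  assume nb: "\<not> (\<exists>b \<in> A. (a, b) \<in> r)"
  have sub: "A \<subseteq> underS r a"
  proof
    fix x assume x: "x \<in> A"
    then have "(a, x) \<notin> r" using nb by blast
    then have "(x, a) \<in> r \<and> x \<noteq> a" using wo_basic(4)[OF C aF] x AF by blast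
    then show "x \<in> underS r a" unfolding underS_def by blast
  qed
  have l1: "(card_of A, card_of (underS r a)) \<in> ordLeq" using card_of_mono1[OF sub] .
  have l2: "(card_of (underS r a), r) \<in> ordLess" using card_of_underS[OF C aF] .
  have "(card_of A, r) \<in> ordLess" using ordLeq_ordLess_trans[OF l1 l2] .
  then show False using not_ordLess_ordIso iso by blast
qed

lemma fibers:
  assumes C: "Card_order r" and inf: "infinite (Field r)"
    and F: "(card_of (Func T (Field r)), r) \<in> ordIso"
  shows "\<exists>\<Phi>. \<forall>g \<in> Func T (Field r). \<forall>c \<in> Field r. \<exists>\<beta> \<in> Field r. (c, \<beta>) \<in> r \<and> \<Phi> \<beta> = g"
proof -
  have FF: "(card_of (Field r), r) \<in> ordIso" using card_of_Field_ordIso C by blast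
  have "(card_of (Func T (Field r)), card_of (Field r)) \<in> ordIso"
    using ordIso_transitive[OF F ordIso_symmetric[OF FF]] .
  then obtain f where f: "bij_betw f (Func T (Field r)) (Field r)" using card_of_ordIso by blast
  have "bij_betw (map_prod f id) (Func T (Field r) \<times> Field r) (Field r \<times> Field r)"
    using f by (simp add: bij_betw_map_prod)
  then have j1: "(card_of (Func T (Field r) \<times> Field r), card_of (Field r \<times> Field r)) \<in> ordIso"
    using card_of_ordIso by blast
  have j2: "(card_of (Field r \<times> Field r), card_of (Field r)) \<in> ordIso"
    using card_of_Times_same_infinite[OF inf] .
  have "(card_of (Field r), card_of (Func T (Field r) \<times> Field r)) \<in> ordIso"
    using ordIso_symmetric[OF ordIso_transitive[OF j1 j2]] .
  then obtain h where h: "bij_betw h (Field r) (Func T (Field r) \<times> Field r)"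
    using card_of_ordIso by blast
  show ?thesis
  proof (rule exI[of _ "\<lambda>b. fst (h b)"], intro ballI)
    fix g c assume g: "g \<in> Func T (Field r)" and c: "c \<in> Field r"
    define Fb where "Fb = {\<beta> \<in> Field r. fst (h \<beta>) = g}"
    have himg: "h ` Fb = {g} \<times> Field r"
    proof
      show "h ` Fb \<subseteq> {g} \<times> Field r"
      proof
        fix p assume "p \<in> h ` Fb"
        then obtain b where b: "b \<in> Fb" "p = h b" by blast
        then have "h b \<in> Func T (Field r) \<times> Field r" using h unfolding Fb_def bij_betw_def by blast
        then show "p \<in> {g} \<times> Field r" using b unfolding Fb_def by (cases "h b") auto
      qed
      show "{g} \<times> Field r \<subseteq> h ` Fb"
      proof
        fix p assume p: "p \<in> {g} \<times> Field r"
        then have "p \<in> h ` Field r" using h g unfolding bij_betw_def by auto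
        then obtain b where "b \<in> Field r" "p = h b" by blast
        then show "p \<in> h ` Fb" using p unfolding Fb_def by auto
      qed
    qed
    have Fbs: "Fb \<subseteq> Field r" unfolding Fb_def by blast
    have "bij_betw h Fb ({g} \<times> Field r)"
      using bij_betw_subset[OF h Fbs himg] .
    then have i1: "(card_of Fb, card_of ({g} \<times> Field r)) \<in> ordIso" using card_of_ordIso by blast
    have "bij_betw snd ({g} \<times> Field r) (Field r)"
      by (auto simp: bij_betw_def inj_on_def)
    then have i2: "(card_of ({g} \<times> Field r), card_of (Field r)) \<in> ordIso" using card_of_ordIso by blast
    have "(card_of Fb, r) \<in> ordIso" using ordIso_transitive[OF ordIso_transitive[OF i1 i2] FF] .
    from big_unbounded[OF C Fbs this c] obtain b where "b \<in> Fb" "(c, b) \<in> r"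
      by blast
    then show "\<exists>\<beta> \<in> Field r. (c, \<beta>) \<in> r \<and> fst (h \<beta>) = g" unfolding Fb_def by blast
  qed
qed

lemma key_cofinal:
  assumes C: "Card_order r" and d: "d \<in> acc r"
    and cof: "cofinal_below r Bs d" and sub: "Bs \<subseteq> M"
    and le: "\<forall>\<beta> \<in> M. (f \<beta>, \<beta>) \<in> r"
    and ch: "\<forall>\<beta> \<in> M. \<forall>\<gamma> \<in> M. (\<gamma>, \<beta>) \<in> r \<and> \<gamma> \<noteq> \<beta> \<longrightarrow> (\<gamma>, f \<beta>) \<in> r"
  shows "cofinal_below r (f ` Bs) d"
  unfolding cofinal_below_def
proof (intro conjI ballI subsetI)
  fix y assume "y \<in> f ` Bs"
  then obtain b where b: "b \<in> Bs" "y = f b" by blast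
  have bd: "(b, d) \<in> r" "b \<noteq> d" using b(1) cof unfolding cofinal_below_def underS_def by auto
  have fb: "(f b, b) \<in> r" using le b(1) sub by blast
  have "(f b, d) \<in> r" using wo_basic(2)[OF C fb bd(1)] .
  moreover have "f b \<noteq> d"
  proof
    assume "f b = d"
    then have "(d, b) \<in> r" using fb by simp
    then show False using wo_basic(3)[OF C bd(1)] bd(2) by blast
  qed
  ultimately show "y \<in> underS r d" using b(2) unfolding underS_def by blast
next
  fix a assume a: "a \<in> underS r d"
  obtain b1 where b1: "b1 \<in> Bs" "(a, b1) \<in> r" using cof a unfolding cofinal_below_def by blast
  have b1d: "(b1, d) \<in> r" "b1 \<noteq> d" using b1(1) cof unfolding cofinal_below_def underS_def by auto
  then have "sless r b1 d" unfolding sless_def by blast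
  then obtain x where x: "sless r b1 x" "sless r x d" using d unfolding acc_def by blast
  then have "x \<in> underS r d" unfolding sless_def underS_def by blast
  then obtain b2 where b2: "b2 \<in> Bs" "(x, b2) \<in> r" using cof unfolding cofinal_below_def by blast
  have b12: "(b1, b2) \<in> r" using wo_basic(2)[OF C _ b2(2)] x(1) unfolding sless_def by blast
  have "b1 \<noteq> b2"
  proof
    assume "b1 = b2"
    then have "(x, b1) \<in> r" using b2 by simp
    then have "x = b1" using wo_basic(3)[OF C] x(1) unfolding sless_def by blast
    then show False using x(1) unfolding sless_def by blast
  qed
  then have "(b1, f b2) \<in> r" using ch b1(1) b2(1) sub b12 by blast
  then have "(a, f b2) \<in> r" using wo_basic(2)[OF C b1(2)] by blast
  then show "\<exists>b \<in> f ` Bs. (a, b) \<in> r" using b2(1) by blast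
qed

theorem proposition3p16:
  fixes r :: "'a rel" and T :: "'t set" and J :: "'a set set"
  assumes "regular_card r" and "uncountable_card r"
    and "(card_of {True}, card_of T) \<in> ordLess"
    and "(card_of T, r) \<in> ordLess"
    and "(BNF_Cardinal_Arithmetic.cexp r (card_of T), r) \<in> ordIso"
    and "is_ideal r J" and "complete_ideal r J"
    and "NS r \<subseteq> J"
    and "clubsuit_minus_tau r T J"
  shows "clubsuit r J"
proof (rule ccontr)
  assume nc: "\<not> clubsuit r J"
  have C: "Card_order r" using assms(1) unfolding regular_card_def by blast
  have FF: "(card_of (Field r), r) \<in> ordIso" using card_of_Field_ordIso C by blast
  have "(natLeq, r) \<in> ordLeq" using assms(2) ordLess_imp_ordLeq unfolding uncountable_card_def by blast
  then have "(natLeq, card_of (Field r)) \<in> ordLeq"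
    using ordLeq_ordIso_trans[OF _ ordIso_symmetric[OF FF]] by blast
  then have inf: "infinite (Field r)" using infinite_iff_natLeq_ordLeq by blast
  have Fu: "(card_of (Func T (Field r)), r) \<in> ordIso"
    using assms(5) unfolding cexp_def Field_card_of .
  obtain \<Phi> where Phi: "\<forall>g \<in> Func T (Field r). \<forall>c \<in> Field r. \<exists>\<beta> \<in> Field r. (c, \<beta>) \<in> r \<and> \<Phi> \<beta> = g"
    using fibers[OF C inf Fu] by blast
  obtain B where Bc: "\<forall>d \<in> acc r. \<forall>i \<in> T. cofinal_below r (B d i) d"
    and Bg: "\<forall>W \<in> full_size r. {d \<in> acc r. \<exists>i \<in> T. B d i \<subseteq> W} \<in> positive r J"
    using assms(9) unfolding clubsuit_minus_tau_def by blast
  define s where "s i d = (if cofinal_below r ((\<lambda>b. \<Phi> b i) ` B d i) d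
     then (\<lambda>b. \<Phi> b i) ` B d i else underS r d)" for i d
  have accF: "acc r \<subseteq> Field r" unfolding acc_def by blast
  have scof: "cofinal_below r (s i d) d" if "d \<in> acc r" for i d
  proof (cases "cofinal_below r ((\<lambda>b. \<Phi> b i) ` B d i) d")
    case True then show ?thesis unfolding s_def by simp
  next
    case False
    have "cofinal_below r (underS r d) d" unfolding cofinal_below_def
    proof (intro conjI ballI)
      fix a assume "a \<in> underS r d"
      then have "(a, a) \<in> r" using wo_basic(1)[OF C] unfolding underS_def by (blast intro: FieldI1)
      then show "\<exists>b \<in> underS r d. (a, b) \<in> r" using \<open>a \<in> underS r d\<close> by blast
    qed simp
    then show ?thesis using False unfolding s_def by simp
  qed
  have "\<exists>A. A \<in> full_size r \<and> {a \<in> acc r. s i a \<subseteq> A} \<in> J" for i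
  proof -
    have "\<not> (\<forall>A \<in> full_size r. {a \<in> acc r. s i a \<subseteq> A} \<in> positive r J)"
      using nc scof unfolding clubsuit_def by blast
    then obtain A where A: "A \<in> full_size r" "{a \<in> acc r. s i a \<subseteq> A} \<notin> positive r J" by blast
    then have "{a \<in> acc r. s i a \<subseteq> A} \<in> J" using accF unfolding positive_def by blast
    then show ?thesis using A(1) by blast
  qed
  then obtain Af where Af: "\<And>i. Af i \<in> full_size r" "\<And>i. {a \<in> acc r. s i a \<subseteq> Af i} \<in> J"
    by metis
  have AfF: "Af i \<subseteq> Field r" and Afiso: "(card_of (Af i), r) \<in> ordIso" for i
    using Af(1)[of i] unfolding full_size_def by auto
  define P where "P W \<longleftrightarrow> W \<subseteq> Field r \<and>
     (\<forall>\<beta> \<in> W. \<forall>i \<in> T. \<Phi> \<beta> i \<in> Af i \<and> (\<Phi> \<beta> i, \<beta>) \<in> r) \<and>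
     (\<forall>\<beta> \<in> W. \<forall>\<gamma> \<in> W. (\<gamma>, \<beta>) \<in> r \<and> \<gamma> \<noteq> \<beta> \<longrightarrow> (\<forall>i \<in> T. (\<gamma>, \<Phi> \<beta> i) \<in> r))" for W
  have "\<forall>Ch \<in> chains {W. P W}. \<Union>Ch \<in> {W. P W}"
  proof
    fix Ch assume Ch: "Ch \<in> chains {W. P W}"
    then have Pm: "\<And>X. X \<in> Ch \<Longrightarrow> P X" and cmp: "\<And>X Y. X \<in> Ch \<Longrightarrow> Y \<in> Ch \<Longrightarrow> X \<subseteq> Y \<or> Y \<subseteq> X"
      unfolding chains_def chain_subset_def by blast+
    have "P (\<Union>Ch)" unfolding P_def
    proof (intro conjI)
      show "\<Union>Ch \<subseteq> Field r" using Pm unfolding P_def by blast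
    next
      show "\<forall>\<beta> \<in> \<Union>Ch. \<forall>i \<in> T. \<Phi> \<beta> i \<in> Af i \<and> (\<Phi> \<beta> i, \<beta>) \<in> r"
      proof (intro ballI)
        fix \<beta> i assume "\<beta> \<in> \<Union>Ch" "i \<in> T"
        then show "\<Phi> \<beta> i \<in> Af i \<and> (\<Phi> \<beta> i, \<beta>) \<in> r" using Pm unfolding P_def by blast
      qed
    next
      show "\<forall>\<beta> \<in> \<Union>Ch. \<forall>\<gamma> \<in> \<Union>Ch. (\<gamma>, \<beta>) \<in> r \<and> \<gamma> \<noteq> \<beta> \<longrightarrow> (\<forall>i \<in> T. (\<gamma>, \<Phi> \<beta> i) \<in> r)"
      proof (intro ballI impI)
      fix \<beta> \<gamma> i assume b: "\<beta> \<in> \<Union>Ch" and g: "\<gamma> \<in> \<Union>Ch" and gb: "(\<gamma>, \<beta>) \<in> r \<and> \<gamma> \<noteq> \<beta>" and i: "i \<in> T"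
      obtain X Y where X: "X \<in> Ch" "\<beta> \<in> X" and Y: "Y \<in> Ch" "\<gamma> \<in> Y" using b g by blast
      show "(\<gamma>, \<Phi> \<beta> i) \<in> r"
      proof (cases "X \<subseteq> Y")
        case True
        then show ?thesis using Pm[OF Y(1)] X(2) Y(2) gb i unfolding P_def by blast
      next
        case False
        then have "Y \<subseteq> X" using cmp X(1) Y(1) by blast
        then show ?thesis using Pm[OF X(1)] X(2) Y(2) gb i unfolding P_def by blast
      qed
      qed
    qed
    then show "\<Union>Ch \<in> {W. P W}" by simp
  qed
  from Zorn_Lemma[OF this] obtain M where PM: "P M" and Mmax: "\<And>X. P X \<Longrightarrow> M \<subseteq> X \<Longrightarrow> X = M"
    by blast
  have MF: "M \<subseteq> Field r" using PM unfolding P_def by blast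
  have unb: "\<forall>a \<in> Field r. \<exists>b \<in> M. (a, b) \<in> r"
  proof (rule ccontr)
    assume "\<not> ?thesis"
    then obtain a where aF: "a \<in> Field r" and na: "\<forall>b \<in> M. (a, b) \<notin> r" by blast
    have Ma: "(b, a) \<in> r" if "b \<in> M" for b using wo_basic(4)[OF C aF, of b] na that MF by blast
    have "\<exists>x. x \<in> Af i \<and> (a, x) \<in> r" for i using big_unbounded[OF C AfF Afiso aF] by blast
    then obtain ai where ai: "\<And>i. ai i \<in> Af i" "\<And>i. (a, ai i) \<in> r" by metis
    define g where "g i = (if i \<in> T then ai i else undefined)" for i
    have gF: "g \<in> Func T (Field r)" unfolding Func_def g_def using ai AfF by auto
    have "g ` T \<subseteq> Field r" using gF unfolding Func_def by blast
    moreover have "(card_of (g ` T), r) \<in> ordLess"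
      using ordLeq_ordLess_trans[OF card_of_image assms(4)] .
    ultimately obtain c where cF: "c \<in> Field r" and gc: "\<forall>x \<in> g ` T. (x, c) \<in> r \<and> x \<noteq> c"
      using bound_small[OF assms(1)] by blast
    obtain \<beta> where bF: "\<beta> \<in> Field r" and cb: "(c, \<beta>) \<in> r" and Pb: "\<Phi> \<beta> = g"
      using Phi gF cF by blast
    have Phii: "\<Phi> \<beta> i = ai i" if "i \<in> T" for i using Pb that unfolding g_def by simp
    have aib: "(ai i, \<beta>) \<in> r" if "i \<in> T" for i
    proof -
      have "(g i, c) \<in> r" using gc that by blast
      then show ?thesis using wo_basic(2)[OF C _ cb] that unfolding g_def by simp
    qed
    have Tne: "T \<noteq> {}"
    proof
      assume "T = {}"
      then have "(card_of T, card_of {True}) \<in> ordLeq" using card_of_empty by simp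
      then show False using assms(3) not_ordLess_ordLeq by blast
    qed
    then obtain i0 where i0: "i0 \<in> T" by blast
    have ab: "(a, \<beta>) \<in> r" using wo_basic(2)[OF C ai(2) aib[OF i0]] .
    then have bM: "\<beta> \<notin> M" using na by blast
    have "P (insert \<beta> M)" unfolding P_def
    proof (intro conjI)
      show "insert \<beta> M \<subseteq> Field r" using MF bF by blast
    next
      show "\<forall>x \<in> insert \<beta> M. \<forall>i \<in> T. \<Phi> x i \<in> Af i \<and> (\<Phi> x i, x) \<in> r"
      proof (intro ballI)
      fix x i assume x: "x \<in> insert \<beta> M" and i: "i \<in> T"
      show "\<Phi> x i \<in> Af i \<and> (\<Phi> x i, x) \<in> r"
      proof (cases "x = \<beta>")
        case True then show ?thesis using Phii[OF i] ai(1) aib[OF i] by simp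
      next
        case False then show ?thesis using x i PM unfolding P_def by blast
      qed
      qed
    next
      show "\<forall>x \<in> insert \<beta> M. \<forall>y \<in> insert \<beta> M. (y, x) \<in> r \<and> y \<noteq> x \<longrightarrow> (\<forall>i \<in> T. (y, \<Phi> x i) \<in> r)"
      proof (intro ballI impI)
      fix x y i assume x: "x \<in> insert \<beta> M" and y: "y \<in> insert \<beta> M"
        and yx: "(y, x) \<in> r \<and> y \<noteq> x" and i: "i \<in> T"
      show "(y, \<Phi> x i) \<in> r"
      proof (cases "x = \<beta>")
        case True
        then have "y \<in> M" using y yx by blast
        then have "(y, a) \<in> r" using Ma by blast
        then show ?thesis using True Phii[OF i] wo_basic(2)[OF C _ ai(2)] by simp
      next
        case False
        then have xM: "x \<in> M" using x by blast
        show ?thesis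
        proof (cases "y = \<beta>")
          case True
          have "(a, x) \<in> r" using wo_basic(2)[OF C ab] yx True by blast
          then show ?thesis using na xM by blast
        next
          case False
          then have "y \<in> M" using y by blast
          then show ?thesis using xM yx i PM unfolding P_def by blast
        qed
      qed
      qed
    qed
    then have "insert \<beta> M = M" using Mmax by blast
    then show False using bM by blast
  qed
  have Mfull: "M \<in> full_size r"
    using assms(1) MF unb unfolding regular_card_def full_size_def by blast
  have Spos: "{d \<in> acc r. \<exists>i \<in> T. B d i \<subseteq> M} \<in> positive r J" using Bg Mfull by blast
  have Ssub: "{d \<in> acc r. \<exists>i \<in> T. B d i \<subseteq> M} \<subseteq> \<Union>((\<lambda>i. {a \<in> acc r. s i a \<subseteq> Af i}) ` T)"
  proof
    fix d assume "d \<in> {d \<in> acc r. \<exists>i \<in> T. B d i \<subseteq> M}"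
    then obtain i where d: "d \<in> acc r" and i: "i \<in> T" and BM: "B d i \<subseteq> M" by blast
    have le: "\<forall>\<beta> \<in> M. ((\<lambda>b. \<Phi> b i) \<beta>, \<beta>) \<in> r" using PM i unfolding P_def by blast
    have ch: "\<forall>\<beta> \<in> M. \<forall>\<gamma> \<in> M. (\<gamma>, \<beta>) \<in> r \<and> \<gamma> \<noteq> \<beta> \<longrightarrow> (\<gamma>, (\<lambda>b. \<Phi> b i) \<beta>) \<in> r"
      using PM i unfolding P_def by blast
    have "cofinal_below r ((\<lambda>b. \<Phi> b i) ` B d i) d"
      using key_cofinal[OF C d _ BM le ch] Bc d i by blast
    then have "s i d = (\<lambda>b. \<Phi> b i) ` B d i" unfolding s_def by simp
    also have "\<dots> \<subseteq> Af i" using BM PM i unfolding P_def by blast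
    finally show "d \<in> \<Union>((\<lambda>i. {a \<in> acc r. s i a \<subseteq> Af i}) ` T)" using d i by blast
  qed
  have FJ: "(\<lambda>i. {a \<in> acc r. s i a \<subseteq> Af i}) ` T \<subseteq> J" using Af(2) by blast
  have "(card_of ((\<lambda>i. {a \<in> acc r. s i a \<subseteq> Af i}) ` T), r) \<in> ordLess"
    using ordLeq_ordLess_trans[OF card_of_image assms(4)] .
  then have "\<Union>((\<lambda>i. {a \<in> acc r. s i a \<subseteq> Af i}) ` T) \<in> J"
    using assms(7) FJ unfolding complete_ideal_def by blast
  then have "{d \<in> acc r. \<exists>i \<in> T. B d i \<subseteq> M} \<in> J"
    using assms(6) Ssub unfolding is_ideal_def by blast
  then show False using Spos unfolding positive_def by blast
qed

end
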